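(* Let $\lambda>0$, $m>0$, $n>0$, $\tan\theta=n/m$, and let $\varphi(\alpha,\beta)=\frac12(\alpha^2+2b\alpha\beta+a\beta^2)+c\alpha+d\beta$ be the conic through $X=(\lambda,0)$, $Y=(0,0)$, $Z=(m,n)$ satisfying (P1) $\varphi(X)=\varphi(Y)=\varphi(Z)=0$ and (P2) $Y-X$ is a positive multiple of $-\nabla\varphi(X)$ and $Z-Y$ is a positive multiple of $-\nabla\varphi(Y)$. Then the conic $\{\varphi=0\}$ is an ellipse if and only if $$0<m<\frac{4\lambda(1+\tan^2\theta)}{(\tan^2\theta+2)^2}.$$
   Context: The coefficients of such a conic are $b=\frac{n}{2m}$, $c=-\lambda/2$, $d=-b\lambda$, $a=\frac{(\lambda-m)(m^2+n^2)}{m n^2}$; the conic is an ellipse iff $a>b^2$. *)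

theory Defs
  imports Complex_Main
begin

definition phi :: "real \<Rightarrow> real \<Rightarrow> real \<Rightarrow> real \<Rightarrow> real \<Rightarrow> real \<Rightarrow> real" where
  "phi a b c d x y = (x^2 + 2*b*x*y + a*y^2) / 2 + c*x + d*y"

definition grad_phi :: "real \<Rightarrow> real \<Rightarrow> real \<Rightarrow> real \<Rightarrow> real \<Rightarrow> real \<Rightarrow> real \<times> real" where
  "grad_phi a b c d x y = (x + b*y + c, b*x + a*y + d)"

text \<open>Standard classification: the plane conic A x^2 + B x y + C y^2 + D x + E y + F = 0 is a
  (real, non-degenerate) ellipse iff its discriminant B^2 - 4AC is negative and its zero set
  contains at least two points (this excludes the degenerate empty and one-point cases).\<close>
definition is_ellipse :: "real \<Rightarrow> real \<Rightarrow> real \<Rightarrow> real \<Rightarrow> real \<Rightarrow> real \<Rightarrow> bool" where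
  "is_ellipse A B C D E F \<longleftrightarrow> B^2 - 4*A*C < 0 \<and>
     (\<exists>p q. p \<noteq> q \<and> A*(fst p)^2 + B*fst p*snd p + C*(snd p)^2 + D*fst p + E*snd p + F = 0
                  \<and> A*(fst q)^2 + B*fst q*snd q + C*(snd q)^2 + D*fst q + E*snd q + F = 0)"

definition phi_is_ellipse :: "real \<Rightarrow> real \<Rightarrow> real \<Rightarrow> real \<Rightarrow> bool" where
  "phi_is_ellipse a b c d \<longleftrightarrow> is_ellipse (1/2) b (a/2) c d 0"

end

theory Submission
  imports Defs
begin

theorem proposition2:
  fixes lam m n \<theta> a b c d :: real
  assumes "lam > 0" and "m > 0" and "n > 0"
    and "tan \<theta> = n / m"
    and P1: "phi a b c d lam 0 = 0" "phi a b c d 0 0 = 0" "phi a b c d m n = 0"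
    and P2X: "\<exists>t>0. (0 - lam, 0 - 0) = (t * (- fst (grad_phi a b c d lam 0)), t * (- snd (grad_phi a b c d lam 0)))"
    and P2Y: "\<exists>s>0. (m - 0, n - 0) = (s * (- fst (grad_phi a b c d 0 0)), s * (- snd (grad_phi a b c d 0 0)))"
  shows "phi_is_ellipse a b c d \<longleftrightarrow>
           0 < m \<and> m < 4 * lam * (1 + (tan \<theta>)^2) / ((tan \<theta>)^2 + 2)^2"
proof -
  have hc: "c = -lam/2" using P1(1) \<open>lam > 0\<close>
  proof -
    have "lam * (lam/2 + c) = 0" using P1(1) by (simp add: phi_def power2_eq_square algebra_simps)
    then show ?thesis using \<open>lam > 0\<close> by simp
  qed
  obtain t where t: "t > 0" "-lam = t * (-(lam + c))" "0 = t * (-(b*lam + d))"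
    using P2X by (auto simp: grad_phi_def)
  have hd: "d = -b*lam" using t by simp
  obtain s where s: "s > 0" "m = s * (-c)" "n = s * (-d)"
    using P2Y by (auto simp: grad_phi_def)
  have hs: "s = 2*m/lam" using s(2) hc \<open>lam>0\<close> by (simp add: field_simps)
  have hb: "b = n/(2*m)" using s(3) hs hd \<open>lam>0\<close> \<open>m>0\<close> by (simp add: field_simps)
  have eq: "m^2 + 2*b*m*n + a*n^2 + 2*c*m + 2*d*n = 0" using P1(3) by (simp add: phi_def field_simps)
  have ha: "a * n^2 = (lam - m)*(m^2+n^2)/m"
    using eq hb hc hd \<open>m>0\<close> by (simp add: field_simps power2_eq_square)
  have ell: "phi_is_ellipse a b c d \<longleftrightarrow> b^2 < a"
  proof -
    have "\<exists>p q. p \<noteq> q \<and> 1/2*(fst p)^2 + b*fst p*snd p + a/2*(snd p)^2 + c*fst p + d*snd p + 0 = 0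
                  \<and> 1/2*(fst q)^2 + b*fst q*snd q + a/2*(snd q)^2 + c*fst q + d*snd q + 0 = 0"
      apply (rule exI[of _ "(lam,0)"], rule exI[of _ "(0,0)"])
      using \<open>lam>0\<close> hc by (simp add: power2_eq_square)
    then show ?thesis unfolding phi_is_ellipse_def is_ellipse_def by simp
  qed
  define T where "T = n/m"
  have nT: "n = T*m" using \<open>m>0\<close> by (simp add: T_def)
  have Tpos: "T > 0" using \<open>m>0\<close> \<open>n>0\<close> by (simp add: T_def)
  have "b^2 < a \<longleftrightarrow> b^2 * n^2 < a * n^2" using \<open>n>0\<close> by simp
  also have "\<dots> \<longleftrightarrow> T^2 * (T^2*m^2) / 4 < (lam - m)*(m^2 + T^2*m^2)/m"
  proof -
    have e1: "a * n^2 = (lam - m)*(m^2 + T^2*m^2)/m" using ha nT by (simp add: power_mult_distrib)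
    have bT: "b = T/2" using hb by (simp add: T_def)
    have e2: "b^2 * n^2 = T^2 * (T^2*m^2) / 4" unfolding bT nT by (simp add: power2_eq_square)
    show ?thesis unfolding e1 e2 ..
  qed
  also have "\<dots> \<longleftrightarrow> T^4 * m < 4*(lam - m)*(1 + T^2)"
  proof -
    have l: "T^2 * (T^2*m^2) / 4 = (m/4) * (T^4 * m)" by (simp add: power2_eq_square power4_eq_xxxx)
    have r: "(lam - m)*(m^2 + T^2*m^2)/m = (m/4) * (4*(lam - m)*(1 + T^2))" using \<open>m>0\<close> by (simp add: power2_eq_square field_simps)
    have p: "m/4 > 0" using \<open>m>0\<close> by auto
    show ?thesis unfolding l r using p by (rule mult_less_cancel_left_pos)
  qed
  also have "\<dots> \<longleftrightarrow> m * (T^2+2)^2 < 4*lam*(1+T^2)"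
    by (simp add: power2_eq_square algebra_simps power4_eq_xxxx)
  also have "\<dots> \<longleftrightarrow> m < 4*lam*(1+T^2)/(T^2+2)^2"
  proof -
    have "T^2 + 2 > 0" by (simp add: add_nonneg_pos)
    then have "(T^2+2)^2 > 0" by simp
    then show ?thesis by (simp add: pos_less_divide_eq mult.commute)
  qed
  finally show ?thesis using ell \<open>m>0\<close> assms(4) by (simp add: T_def)
qed

end
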